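(* Let $V,V'$ be finite-dimensional complex vector spaces, $G\subset GL(V)$ and $G'\subset GL(V')$ finite subgroups, and $F:V\to V'$ a holomorphic diffeomorphism which maps $G$-orbits bijectively onto $G'$-orbits. Then there is a unique group isomorphism $a:G\to G'$ such that $F\circ g=a(g)\circ F$ for every $g\in G$. In particular $a$ and $a^{-1}$ map complex reflections to complex reflections. *)

theory Defs
  imports "HOL-Analysis.Analysis"
begin

text \<open>Finite-dimensional complex vector spaces are modelled as complex^'n with 'n finite.\<close>

definition clinear :: "(complex^'n \<Rightarrow> complex^'m) \<Rightarrow> bool" where
  "clinear f \<longleftrightarrow> Vector_Spaces.linear ((*s) :: complex \<Rightarrow> _) ((*s) :: complex \<Rightarrow> _) f"

definition GL :: "(complex^'n \<Rightarrow> complex^'n) set" where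
  "GL = {f. clinear f \<and> bij f}"

definition finite_subgroup_GL :: "(complex^'n \<Rightarrow> complex^'n) set \<Rightarrow> bool" where
  "finite_subgroup_GL G \<longleftrightarrow> finite G \<and> G \<subseteq> GL \<and> id \<in> G \<and>
     (\<forall>g\<in>G. \<forall>h\<in>G. g \<circ> h \<in> G) \<and> (\<forall>g\<in>G. inv g \<in> G)"

text \<open>Holomorphic maps in several variables: complex (Frechet) differentiable everywhere,
  i.e. the real derivative is complex-linear at every point.\<close>
definition holomorphic_map :: "(complex^'n \<Rightarrow> complex^'m) \<Rightarrow> bool" where
  "holomorphic_map F \<longleftrightarrow> (\<forall>x. \<exists>L. clinear L \<and> (F has_derivative L) (at x))"

definition holomorphic_diffeo :: "(complex^'n \<Rightarrow> complex^'m) \<Rightarrow> bool" where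
  "holomorphic_diffeo F \<longleftrightarrow> bij F \<and> holomorphic_map F \<and> holomorphic_map (inv F)"

definition orbit :: "('a \<Rightarrow> 'a) set \<Rightarrow> 'a \<Rightarrow> 'a set" where
  "orbit G x = (\<lambda>g. g x) ` G"

definition complex_reflection :: "(complex^'n \<Rightarrow> complex^'n) \<Rightarrow> bool" where
  "complex_reflection g \<longleftrightarrow> g \<in> GL \<and> g \<noteq> id \<and> (\<exists>k>0. g ^^ k = id) \<and>
     vec.dim {v. g v = v} = CARD('n) - 1"

definition group_iso_on ::
  "(complex^'n \<Rightarrow> complex^'n) set \<Rightarrow> (complex^'m \<Rightarrow> complex^'m) set \<Rightarrow>
   ((complex^'n \<Rightarrow> complex^'n) \<Rightarrow> (complex^'m \<Rightarrow> complex^'m)) \<Rightarrow> bool" where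
  "group_iso_on G G' a \<longleftrightarrow> bij_betw a G G' \<and> (\<forall>g\<in>G. \<forall>h\<in>G. a (g \<circ> h) = a g \<circ> a h)"

end

theory Submission
  imports Defs "HOL-Complex_Analysis.Complex_Analysis"
begin

lemma clinear_linear:
  fixes f :: "complex^'n \<Rightarrow> complex^'m"
  assumes "clinear f" shows "linear f"
proof -
  interpret lf: Vector_Spaces.linear "(*s)" "(*s)" f using assms unfolding clinear_def .
  have sc: "r *\<^sub>R x = (complex_of_real r) *s x" for r and x :: "complex^'k"
    by (simp add: vec_eq_iff of_real_def)
  show ?thesis
    by (rule linearI) (simp_all add: lf.add sc lf.scale)
qed

lemma clinear_bl: "clinear f \<Longrightarrow> bounded_linear f"
  using clinear_linear linear_conv_bounded_linear by blast

lemma clinear_deriv: "clinear f \<Longrightarrow> (f has_derivative f) F"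
  using clinear_bl bounded_linear_imp_has_derivative by blast

lemma clinear_comp: "clinear f \<Longrightarrow> clinear g \<Longrightarrow> clinear (f \<circ> g)"
  unfolding clinear_def using Vector_Spaces.linear_compose by blast

lemma clinear_cont: "clinear f \<Longrightarrow> continuous_on S f"
  using clinear_bl linear_continuous_on by blast

lemma holo_cont: "holomorphic_map F \<Longrightarrow> continuous_on S F"
  unfolding holomorphic_map_def
  by (meson continuous_at_imp_continuous_on has_derivative_continuous)

lemma holo_comp_lin: "holomorphic_map F \<Longrightarrow> clinear g \<Longrightarrow> holomorphic_map (F \<circ> g)"
  unfolding holomorphic_map_def
proof
  fix x assume H: "\<forall>x. \<exists>L. clinear L \<and> (F has_derivative L) (at x)" and g: "clinear g"
  then obtain L where L: "clinear L" "(F has_derivative L) (at (g x))" by blast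
  have "((F \<circ> g) has_derivative (L \<circ> g)) (at x)"
    by (rule diff_chain_at[OF clinear_deriv[OF g] L(2)])
  then show "\<exists>L. clinear L \<and> ((F \<circ> g) has_derivative L) (at x)"
    using clinear_comp[OF L(1) g] by blast
qed

lemma holo_lin_comp: "holomorphic_map F \<Longrightarrow> clinear g \<Longrightarrow> holomorphic_map (g \<circ> F)"
  unfolding holomorphic_map_def
proof
  fix x assume H: "\<forall>x. \<exists>L. clinear L \<and> (F has_derivative L) (at x)" and g: "clinear g"
  then obtain L where L: "clinear L" "(F has_derivative L) (at x)" by blast
  have "((g \<circ> F) has_derivative (g \<circ> L)) (at x)"
    by (rule diff_chain_at[OF L(2) clinear_deriv[OF g]])
  then show "\<exists>L. clinear L \<and> ((g \<circ> F) has_derivative L) (at x)"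
    using clinear_comp[OF g L(1)] by blast
qed

lemma line_deriv:
  fixes x0 v :: "complex^'n"
  shows "((\<lambda>z. x0 + z *s v) has_derivative (\<lambda>h. h *s v)) (at z)"
proof -
  have "linear (\<lambda>h::complex. h *s v)"
    by (rule linearI) (simp_all add: vec_eq_iff algebra_simps)
  then have "bounded_linear (\<lambda>h::complex. h *s v)"
    using linear_conv_bounded_linear by blast
  then have "((\<lambda>h::complex. h *s v) has_derivative (\<lambda>h. h *s v)) (at z)"
    using bounded_linear_imp_has_derivative by blast
  then have "((\<lambda>h::complex. h *s v + x0) has_derivative (\<lambda>h. h *s v)) (at z)"
    by (rule has_derivative_add_const)
  moreover have "(\<lambda>z. x0 + z *s v) = (\<lambda>z. z *s v + x0)"
    by (simp add: fun_eq_iff add.commute)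
  ultimately show ?thesis by simp
qed

lemma line_holo:
  fixes H :: "complex^'n \<Rightarrow> complex^'m"
  assumes "holomorphic_map H"
  shows "(\<lambda>z. H (x0 + z *s v) $ i) holomorphic_on UNIV"
proof -
  have "(\<lambda>z. H (x0 + z *s v) $ i) field_differentiable at z" for z
  proof -
    obtain L where L: "clinear L" "(H has_derivative L) (at (x0 + z *s v))"
      using assms unfolding holomorphic_map_def by blast
    interpret lf: Vector_Spaces.linear "(*s)" "(*s)" L using L(1) unfolding clinear_def .
    have "((H \<circ> (\<lambda>z. x0 + z *s v)) has_derivative (L \<circ> (\<lambda>h. h *s v))) (at z)"
      by (rule diff_chain_at[OF line_deriv L(2)])
    then have "((\<lambda>z. (H \<circ> (\<lambda>z. x0 + z *s v)) z $ i) has_derivative (\<lambda>h. (L \<circ> (\<lambda>h. h *s v)) h $ i)) (at z)"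
      by (rule bounded_linear.has_derivative[OF bounded_linear_vec_nth])
    moreover have "(\<lambda>h. (L \<circ> (\<lambda>h. h *s v)) h $ i) = (\<lambda>h. (L v $ i) * h)"
      by (auto simp: lf.scale)
    ultimately have "((\<lambda>z. H (x0 + z *s v) $ i) has_field_derivative (L v $ i)) (at z)"
      unfolding has_field_derivative_def by (simp add: o_def)
    then show ?thesis unfolding field_differentiable_def by blast
  qed
  then show ?thesis
    by (simp add: holomorphic_on_def field_differentiable_at_within)
qed

lemma identity_thm:
  fixes H1 H2 :: "complex^'n \<Rightarrow> complex^'m"
  assumes h1: "holomorphic_map H1" and h2: "holomorphic_map H2"
    and S: "open S" "x0 \<in> S" "\<forall>y\<in>S. H1 y = H2 y"
  shows "H1 y = H2 y"
proof -
  define v where "v = y - x0"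
  define \<gamma> where "\<gamma> = (\<lambda>z::complex. x0 + z *s v)"
  have cg: "continuous_on UNIV \<gamma>"
    unfolding \<gamma>_def
    by (metis continuous_at_imp_continuous_on has_derivative_continuous line_deriv)
  define U where "U = \<gamma> -` S"
  have U: "open U" "0 \<in> U"
    using open_vimage[OF S(1) cg] S(2) unfolding U_def \<gamma>_def by auto
  have "H1 y $ i = H2 y $ i" for i
  proof -
    define \<phi> where "\<phi> = (\<lambda>z. H1 (x0 + z *s v) $ i - H2 (x0 + z *s v) $ i)"
    have hol: "\<phi> holomorphic_on UNIV"
      unfolding \<phi>_def using line_holo[OF h1] line_holo[OF h2] by (rule holomorphic_on_diff)
    have z0: "\<phi> z = 0" if "z \<in> U" for z
      using that S unfolding \<phi>_def U_def \<gamma>_def by auto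
    have "\<phi> 1 = 0"
      by (rule analytic_continuation[of \<phi> UNIV U 0 1, OF hol]) (use U open_imp_islimpt z0 in auto)
    then show ?thesis unfolding \<phi>_def v_def by simp
  qed
  then show ?thesis by (simp add: vec_eq_iff)
qed

lemma vsub_sub: "vec.subspace (W :: (complex^'n) set) \<Longrightarrow> subspace W"
proof -
  assume W: "vec.subspace W"
  have sc: "r *\<^sub>R x = (complex_of_real r) *s x" for r and x :: "complex^'k"
    by (simp add: vec_eq_iff of_real_def)
  show ?thesis using W unfolding subspace_def vec.subspace_def sc by blast
qed

lemma deriv_maps_subspace:
  fixes F :: "complex^'n \<Rightarrow> complex^'m"
  assumes D: "(F has_derivative D) (at 0)" and W: "vec.subspace W" and W': "vec.subspace W'"
    and FW: "F ` W \<subseteq> W'" and w: "w \<in> W"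
  shows "D w \<in> W'"
proof -
  have sW': "subspace W'" using vsub_sub[OF W'] .
  have sW: "subspace W" using vsub_sub[OF W] .
  have cW': "closed W'" using closed_subspace[OF sW'] .
  have bl: "bounded_linear D" using has_derivative_bounded_linear[OF D] .
  define \<phi> where "\<phi> = (\<lambda>t::real. F (t *\<^sub>R w))"
  have "((\<lambda>t::real. t *\<^sub>R w) has_derivative (\<lambda>t. t *\<^sub>R w)) (at 0)"
    by (rule bounded_linear_imp_has_derivative) (rule bounded_linear_scaleR_left)
  then have "((F \<circ> (\<lambda>t::real. t *\<^sub>R w)) has_derivative (D \<circ> (\<lambda>t. t *\<^sub>R w))) (at 0)"
    using diff_chain_at[of "\<lambda>t::real. t *\<^sub>R w" _ 0 F D] D by simp
  moreover have "(D \<circ> (\<lambda>t. t *\<^sub>R w)) = (\<lambda>t. t *\<^sub>R D w)"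
    using bl by (auto simp: linear_cmul bounded_linear.linear)
  ultimately have "(\<phi> has_derivative (\<lambda>t. t *\<^sub>R D w)) (at 0)"
    unfolding \<phi>_def by (simp add: o_def)
  then have lim: "((\<lambda>y. ((\<phi> y - \<phi> 0) - y *\<^sub>R D w) /\<^sub>R norm (y - 0)) \<longlongrightarrow> 0) (at 0)"
    unfolding has_derivative_within by (simp add: diff_diff_add inverse_eq_divide)
  define q where "q = (\<lambda>y::real. (\<phi> y - \<phi> 0) /\<^sub>R y)"
  have "((\<lambda>y. ((\<phi> y - \<phi> 0) - y *\<^sub>R D w) /\<^sub>R norm (y - 0)) \<longlongrightarrow> 0) (at_right 0)"
    by (rule tendsto_mono[OF at_le lim]) simp
  moreover have "\<forall>\<^sub>F y in at_right 0. ((\<phi> y - \<phi> 0) - y *\<^sub>R D w) /\<^sub>R norm (y - 0) = q y - D w"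
    using eventually_at_right_less[of "0::real"]
    by eventually_elim (simp add: q_def algebra_simps)
  ultimately have "((\<lambda>y. q y - D w) \<longlongrightarrow> 0) (at_right 0)"
    using tendsto_cong by fastforce
  then have qlim: "(q \<longlongrightarrow> D w) (at_right (0::real))"
    by (rule LIM_zero_cancel)
  have "q y \<in> W'" for y
  proof -
    have "\<phi> y \<in> W'" unfolding \<phi>_def using FW w sW subspace_scale by blast
    moreover have "\<phi> 0 \<in> W'" unfolding \<phi>_def using FW sW subspace_0 by fastforce
    ultimately show ?thesis unfolding q_def using sW' subspace_diff subspace_scale by blast
  qed
  then show ?thesis
    using Lim_in_closed_set[OF cW' _ _ qlim] by simp
qed

lemma dim_le:
  fixes F :: "complex^'n \<Rightarrow> complex^'m"
  assumes "holomorphic_diffeo F" and W: "vec.subspace W" and W': "vec.subspace W'"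
    and FW: "F ` W \<subseteq> W'"
  shows "vec.dim W \<le> vec.dim W'"
proof -
  have bF: "bij F" and hF: "holomorphic_map F" and hF': "holomorphic_map (inv F)"
    using assms(1) unfolding holomorphic_diffeo_def by auto
  obtain D where D: "clinear D" "(F has_derivative D) (at 0)"
    using hF unfolding holomorphic_map_def by blast
  obtain D' where D': "clinear D'" "(inv F has_derivative D') (at (F 0))"
    using hF' unfolding holomorphic_map_def by blast
  have "((inv F \<circ> F) has_derivative (D' \<circ> D)) (at 0)"
    by (rule diff_chain_at[OF D(2) D'(2)])
  moreover have "inv F \<circ> F = id" using bF by (simp add: bij_is_inj)
  ultimately have "(id has_derivative (D' \<circ> D)) (at 0)" by simp
  then have "D' \<circ> D = id" using has_derivative_id has_derivative_unique
    by (metis eq_id_iff)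
  then have injD: "inj D" by (metis inj_on_id inj_on_imageI2)
  have "vec.dim (D ` W) = vec.dim W"
    by (rule vec.dim_image_eq) (use D(1) injD in \<open>auto simp: clinear_def intro: inj_on_subset\<close>)
  moreover have "D ` W \<subseteq> W'"
    using deriv_maps_subspace[OF D(2) W W' FW] by blast
  ultimately show ?thesis using vec.dim_subset by metis
qed

lemma finite_union_closed_interior:
  "finite I \<Longrightarrow> (\<forall>i\<in>I. closed (A i) \<and> interior (A i) = {}) \<Longrightarrow> interior (\<Union>i\<in>I. A i) = {}"
proof (induction I rule: finite_induct)
  case empty then show ?case by simp
next
  case (insert j I)
  then have "interior (\<Union>i\<in>I. A i) = {}" by simp
  then have "interior (A j \<union> (\<Union>i\<in>I. A i)) = interior (A j)"
    using insert.prems interior_closed_Un_empty_interior by blast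
  then show ?case using insert.prems by simp
qed

lemma exists_conj:
  fixes F :: "complex^'n \<Rightarrow> complex^'m"
  assumes G: "finite_subgroup_GL G" and G': "finite_subgroup_GL G'"
    and hF: "holomorphic_map F"
    and orb: "\<forall>x. F ` orbit G x = orbit G' (F x)"
    and g: "g \<in> G"
  shows "\<exists>h\<in>G'. F \<circ> g = h \<circ> F"
proof -
  have gl: "clinear g" using G g unfolding finite_subgroup_GL_def GL_def by auto
  have hl: "clinear h" if "h \<in> G'" for h
    using G' that unfolding finite_subgroup_GL_def GL_def by auto
  define A where "A = (\<lambda>h. {x. (F \<circ> g) x = (h \<circ> F) x})"
  have cl: "closed (A h)" if "h \<in> G'" for h
    unfolding A_def
    by (rule closed_Collect_eq)
      (use holo_cont[OF holo_comp_lin[OF hF gl]] holo_cont[OF holo_lin_comp[OF hF hl[OF that]]] in auto)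
  have cov: "(\<Union>h\<in>G'. A h) = UNIV"
  proof -
    have "x \<in> (\<Union>h\<in>G'. A h)" for x
    proof -
      have "F (g x) \<in> F ` orbit G x" using g unfolding orbit_def by auto
      then have "F (g x) \<in> orbit G' (F x)" using orb by simp
      then show ?thesis unfolding orbit_def A_def by auto
    qed
    then show ?thesis by auto
  qed
  have fin: "finite G'" using G' unfolding finite_subgroup_GL_def by auto
  obtain h where h: "h \<in> G'" "interior (A h) \<noteq> {}"
  proof (rule ccontr)
    assume "\<not> thesis"
    with that have "\<forall>h\<in>G'. closed (A h) \<and> interior (A h) = {}" using cl by blast
    then have "interior (\<Union>h\<in>G'. A h) = {}" using finite_union_closed_interior[OF fin] by blast
    then show False using cov by simp
  qed
  then obtain x0 where x0: "x0 \<in> interior (A h)" by blast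
  have "(F \<circ> g) y = (h \<circ> F) y" for y
    by (rule identity_thm[OF holo_comp_lin[OF hF gl] holo_lin_comp[OF hF hl[OF h(1)]] open_interior x0])
       (use interior_subset in \<open>auto simp: A_def\<close>)
  then show ?thesis using h(1) by blast
qed

lemma fix_subspace:
  assumes "clinear g" shows "vec.subspace {v. g v = v}"
proof -
  interpret lf: Vector_Spaces.linear "(*s)" "(*s)" g using assms unfolding clinear_def .
  show ?thesis unfolding vec.subspace_def by (auto simp: lf.add lf.scale lf.zero)
qed

lemma diffeo_inv:
  assumes "holomorphic_diffeo F" shows "holomorphic_diffeo (inv F)"
  using assms unfolding holomorphic_diffeo_def
  by (simp add: bij_imp_bij_inv inv_inv_eq)

lemma dim_eq_img:
  fixes F :: "complex^'n \<Rightarrow> complex^'m"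
  assumes "holomorphic_diffeo F" "vec.subspace W" "vec.subspace W'" "F ` W = W'"
  shows "vec.dim W = vec.dim W'"
proof -
  have b: "bij F" using assms(1) unfolding holomorphic_diffeo_def by auto
  have "inv F ` W' = W" using assms(4) b by (metis bij_is_inj image_inv_f_f)
  then show ?thesis
    using dim_le[OF assms(1) assms(2,3)] dim_le[OF diffeo_inv[OF assms(1)] assms(3,2)] assms(4)
    by (simp add: le_antisym)
qed

lemma card_eq:
  fixes F :: "complex^'n \<Rightarrow> complex^'m"
  assumes "holomorphic_diffeo F"
  shows "CARD('n) = CARD('m)"
proof -
  have b: "bij F" using assms(1) unfolding holomorphic_diffeo_def by auto
  have "vec.dim (UNIV :: (complex^'n) set) = vec.dim (UNIV :: (complex^'m) set)"
    by (rule dim_eq_img[OF assms]) (use b bij_is_surj in auto)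
  then show ?thesis by (simp add: card_cart_basis)
qed

theorem lemma5p1:
  fixes G :: "(complex^'n \<Rightarrow> complex^'n) set"
    and G' :: "(complex^'m \<Rightarrow> complex^'m) set"
    and F :: "complex^'n \<Rightarrow> complex^'m"
  assumes "finite_subgroup_GL G" and "finite_subgroup_GL G'"
    and "holomorphic_diffeo F"
    and "\<forall>x. F ` orbit G x = orbit G' (F x)"
  shows "(\<exists>!a. a \<in> G \<rightarrow>\<^sub>E G' \<and> group_iso_on G G' a \<and> (\<forall>g\<in>G. F \<circ> g = a g \<circ> F))
    \<and> (\<forall>a. a \<in> G \<rightarrow>\<^sub>E G' \<and> group_iso_on G G' a \<and> (\<forall>g\<in>G. F \<circ> g = a g \<circ> F) \<longrightarrow>
         (\<forall>g\<in>G. complex_reflection g \<longleftrightarrow> complex_reflection (a g)))"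
proof -
  note G = assms(1) and G' = assms(2) and dF = assms(3) and orb = assms(4)
  have bF: "bij F" and hF: "holomorphic_map F" and hF': "holomorphic_map (inv F)"
    using dF unfolding holomorphic_diffeo_def by auto
  have injF: "inj F" and surjF: "surj F" using bF bij_is_inj bij_is_surj by auto
  have uniqR: "h1 = h2" if "h1 \<circ> F = h2 \<circ> F" for h1 h2 :: "complex^'m \<Rightarrow> complex^'m"
  proof
    fix y obtain x where "y = F x" using surjF by blast
    then show "h1 y = h2 y" using that by (metis comp_apply)
  qed
  have uniqL: "g1 = g2" if "F \<circ> g1 = F \<circ> g2" for g1 g2 :: "complex^'n \<Rightarrow> complex^'n"
  proof
    fix x show "g1 x = g2 x" using that injF by (metis comp_apply injD)
  qed
  have orb': "\<forall>y. inv F ` orbit G' y = orbit G (inv F y)"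
  proof
    fix y
    have "y = F (inv F y)" using surjF by (simp add: surj_f_inv_f)
    then have "orbit G' y = F ` orbit G (inv F y)" using orb by metis
    then show "inv F ` orbit G' y = orbit G (inv F y)" using injF by (simp add: image_image)
  qed
  have conj: "\<exists>h\<in>G'. F \<circ> g = h \<circ> F" if "g \<in> G" for g
    using exists_conj[OF G G' hF orb that] .
  have conj': "\<exists>g\<in>G. F \<circ> g = h \<circ> F" if hG: "h \<in> G'" for h
  proof -
    obtain g where g: "g \<in> G" "inv F \<circ> h = g \<circ> inv F"
      using exists_conj[OF G' G hF' orb' hG] by blast
    have "F \<circ> g = F \<circ> g \<circ> (inv F \<circ> F)" using injF by (simp add: o_assoc)
    also have "\<dots> = F \<circ> (inv F \<circ> h) \<circ> F" using g(2) by (simp add: o_assoc)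
    also have "\<dots> = h \<circ> F" using surjF by (simp add: fun_eq_iff surj_f_inv_f)
    finally show ?thesis using g(1) by blast
  qed
  have comp: "g \<circ> k \<in> G" if "g \<in> G" "k \<in> G" for g k
    using G that unfolding finite_subgroup_GL_def by blast
  define P where "P = (\<lambda>a. a \<in> G \<rightarrow>\<^sub>E G' \<and> group_iso_on G G' a \<and> (\<forall>g\<in>G. F \<circ> g = a g \<circ> F))"
  have Puniq: "a = b" if "P a" "P b" for a b
  proof (rule extensionalityI)
    show "a \<in> extensional G" "b \<in> extensional G" using that unfolding P_def PiE_def by auto
    fix g assume "g \<in> G"
    then show "a g = b g" using that unfolding P_def by (metis uniqR)
  qed
  define a0 where "a0 = (\<lambda>g\<in>G. THE h. h \<in> G' \<and> F \<circ> g = h \<circ> F)"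
  have a0: "a0 g \<in> G' \<and> F \<circ> g = a0 g \<circ> F" if "g \<in> G" for g
  proof -
    have "\<exists>!h. h \<in> G' \<and> F \<circ> g = h \<circ> F" using conj[OF that] uniqR by metis
    then have "(THE h. h \<in> G' \<and> F \<circ> g = h \<circ> F) \<in> G' \<and> F \<circ> g = (THE h. h \<in> G' \<and> F \<circ> g = h \<circ> F) \<circ> F"
      by (rule theI')
    then show ?thesis unfolding a0_def using that by simp
  qed
  have "P a0"
    unfolding P_def
  proof (intro conjI)
    show "a0 \<in> G \<rightarrow>\<^sub>E G'" unfolding a0_def using a0 by (auto simp: a0_def)
    show "\<forall>g\<in>G. F \<circ> g = a0 g \<circ> F" using a0 by blast
    show "group_iso_on G G' a0"
      unfolding group_iso_on_def
    proof (intro conjI ballI)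
      show "bij_betw a0 G G'"
        unfolding bij_betw_def
      proof
        show "inj_on a0 G"
        proof (rule inj_onI)
          fix g k assume "g \<in> G" "k \<in> G" "a0 g = a0 k"
          then show "g = k" using a0 uniqL by metis
        qed
        show "a0 ` G = G'"
        proof
          show "a0 ` G \<subseteq> G'" using a0 by blast
          show "G' \<subseteq> a0 ` G"
          proof
            fix h assume "h \<in> G'"
            then obtain g where "g \<in> G" "F \<circ> g = h \<circ> F" using conj' by blast
            then have "a0 g = h" using a0 uniqR by metis
            then show "h \<in> a0 ` G" using \<open>g \<in> G\<close> by blast
          qed
        qed
      qed
      fix g k assume gk: "g \<in> G" "k \<in> G"
      have "a0 (g \<circ> k) \<circ> F = F \<circ> (g \<circ> k)" using a0[OF comp[OF gk]] by simp
      also have "\<dots> = (a0 g \<circ> a0 k) \<circ> F" using a0[OF gk(1)] a0[OF gk(2)]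
        by (metis comp_assoc)
      finally show "a0 (g \<circ> k) = a0 g \<circ> a0 k" by (rule uniqR)
    qed
  qed
  then have part1: "\<exists>!a. P a" using Puniq by blast
  have part2: "complex_reflection g \<longleftrightarrow> complex_reflection (b g)" if "P b" "g \<in> G" for b g
  proof -
    define h where "h = b g"
    have h: "h \<in> G'" "F \<circ> g = h \<circ> F" using that unfolding P_def h_def by auto
    have gGL: "g \<in> GL" using G that(2) unfolding finite_subgroup_GL_def by auto
    have hGL: "h \<in> GL" using G' h(1) unfolding finite_subgroup_GL_def by auto
    have pow: "F \<circ> g ^^ k = h ^^ k \<circ> F" for k
    proof (induction k)
      case 0 then show ?case by simp
    next
      case (Suc k)
      have "F \<circ> g ^^ Suc k = (F \<circ> g) \<circ> g ^^ k" by (simp add: o_assoc)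
      also have "\<dots> = h \<circ> (F \<circ> g ^^ k)" using h(2) by (simp add: o_assoc)
      also have "\<dots> = h ^^ Suc k \<circ> F" using Suc by (simp add: fun_eq_iff)
      finally show ?case .
    qed
    have powiff: "g ^^ k = id \<longleftrightarrow> h ^^ k = id" for k
    proof
      assume "g ^^ k = id"
      then have "h ^^ k \<circ> F = id \<circ> F" using pow[of k] by simp
      then show "h ^^ k = id" by (rule uniqR)
    next
      assume "h ^^ k = id"
      then have "F \<circ> g ^^ k = F \<circ> id" using pow[of k] by simp
      then show "g ^^ k = id" by (rule uniqL)
    qed
    have idiff: "g = id \<longleftrightarrow> h = id" using powiff[of 1] by simp
    have img: "F ` {v. g v = v} = {v. h v = v}"
    proof
      show "F ` {v. g v = v} \<subseteq> {v. h v = v}"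
      proof (rule image_subsetI)
        fix x assume "x \<in> {v. g v = v}"
        then show "F x \<in> {v. h v = v}" using fun_cong[OF h(2), of x] by simp
      qed
      show "{v. h v = v} \<subseteq> F ` {v. g v = v}"
      proof
        fix y assume y: "y \<in> {v. h v = v}"
        obtain x where x: "y = F x" using surjF by blast
        have "F (g x) = h (F x)" using fun_cong[OF h(2), of x] by simp
        also have "\<dots> = F x" using y x by simp
        finally have "F (g x) = F x" .
        then have "g x = x" using injF by (simp add: inj_eq)
        then show "y \<in> F ` {v. g v = v}" using x by blast
      qed
    qed
    have gl: "clinear g" using gGL unfolding GL_def by auto
    have hl: "clinear h" using hGL unfolding GL_def by auto
    have dimeq: "vec.dim {v. g v = v} = vec.dim {v. h v = v}"
      by (rule dim_eq_img[OF dF fix_subspace[OF gl] fix_subspace[OF hl] img])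
    have ceq: "CARD('n) = CARD('m)" using card_eq[OF dF] .
    have r1: "complex_reflection g \<longleftrightarrow> (g \<noteq> id \<and> (\<exists>k>0. g ^^ k = id) \<and> vec.dim {v. g v = v} = CARD('n) - 1)"
      unfolding complex_reflection_def using gGL by simp
    have r2: "complex_reflection h \<longleftrightarrow> (h \<noteq> id \<and> (\<exists>k>0. h ^^ k = id) \<and> vec.dim {v. h v = v} = CARD('m) - 1)"
      unfolding complex_reflection_def using hGL by simp
    have "(\<exists>k>0. g ^^ k = id) \<longleftrightarrow> (\<exists>k>0. h ^^ k = id)" using powiff by blast
    then have "complex_reflection g \<longleftrightarrow> complex_reflection h"
      unfolding r1 r2 using idiff dimeq ceq by argo
    then show ?thesis unfolding h_def .
  qed
  show ?thesis using part1 part2 unfolding P_def by blast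
qed

end
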